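(* Let $P$ and $Q$ be probability distributions on a countable password space $\mathcal{PW}$ (discrete case) such that $Q(pw)>0$ whenever $P(pw)>0$, and let $k\ge 2$. Define $G(x)=\Pr_{pw\gets Q}\!\left[\frac{P(pw)}{Q(pw)}\le x\right]$ and $G(x^-)=\Pr_{pw\gets Q}\!\left[\frac{P(pw)}{Q(pw)}< x\right]$. Then the flatness satisfies $$\epsilon(1)=\sum_{x}\frac{1}{k}\,x\left[G^{k}(x)-G^{k}(x^-)\right],$$ where the sum ranges over the values $x$ taken by $P(pw)/Q(pw)$ for $pw$ with $Q(pw)>0$.
   Context: The flatness game $FlatGame^{P,Q,k}_{\mathcal{A}}(n)$: sample a password $pw\gets P$ and $k-1$ honeywords independently from $Q$; form the list of these $k$ words and shuffle it uniformly at random. The attacker $\mathcal{A}$ (any probabilistic Turing machine, which may know $P$ and $Q$) receives the shuffled list and outputs $n$ guesses (positions in the list); it wins if the position holding $pw$ is among its guesses. $\epsilon(1)=\max_{\mathcal{A}}\Pr[FlatGame^{P,Q,k}_{\mathcal{A}}(1)=1]$ is the flatness. *)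

theory Defs
  imports "HOL-Probability.Probability" "HOL-Combinatorics.Permutations"
begin

text \<open>The true password pw is drawn from P,
  k-1 honeywords are drawn i.i.d. from Q, the list pw # honeywords is shuffled by a
  uniformly random permutation sigma of the positions {0..<k} (position j of the shuffled
  list holds the entry sigma j of the original list), so the true password sits at position
  inv sigma 0.  The attacker is an arbitrary randomized map from the shuffled list to a list
  of guesses (positions).\<close>

definition FlatGame :: "'a pmf \<Rightarrow> 'a pmf \<Rightarrow> nat \<Rightarrow> ('a list \<Rightarrow> nat list pmf) \<Rightarrow> bool pmf" where
  "FlatGame P Q k A = do {
     pw \<leftarrow> P;
     hs \<leftarrow> replicate_pmf (k - 1) Q;
     \<sigma> \<leftarrow> pmf_of_set {\<sigma>. \<sigma> permutes {..<k}};
     guesses \<leftarrow> A (map (\<lambda>j. (pw # hs) ! \<sigma> j) [0..<k]);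
     return_pmf (inv \<sigma> 0 \<in> set guesses)
   }"

definition valid_attacker :: "nat \<Rightarrow> ('a list \<Rightarrow> nat list pmf) \<Rightarrow> bool" where
  "valid_attacker n A \<longleftrightarrow> (\<forall>L. \<forall>g \<in> set_pmf (A L). length g = n)"

definition flatness :: "'a pmf \<Rightarrow> 'a pmf \<Rightarrow> nat \<Rightarrow> nat \<Rightarrow> real" where
  "flatness P Q k n = (SUP A \<in> {A. valid_attacker n A}. pmf (FlatGame P Q k A) True)"

definition G_le :: "'a pmf \<Rightarrow> 'a pmf \<Rightarrow> real \<Rightarrow> real" where
  "G_le P Q x = measure_pmf.prob Q {pw. pmf P pw / pmf Q pw \<le> x}"

definition G_less :: "'a pmf \<Rightarrow> 'a pmf \<Rightarrow> real \<Rightarrow> real" where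
  "G_less P Q x = measure_pmf.prob Q {pw. pmf P pw / pmf Q pw < x}"

end

theory Submission
  imports Defs
begin

lemma replicate_pmf_Suc_map:
  "replicate_pmf (Suc n) Q = map_pmf (\<lambda>(x,xs). x#xs) (pair_pmf Q (replicate_pmf n Q))"
  by (simp add: map_pmf_def pair_pmf_def bind_assoc_pmf bind_return_pmf)

lemma pmf_replicate_pmf:
  "pmf (replicate_pmf n Q) xs = (if length xs = n then prod_list (map (pmf Q) xs) else 0)"
proof (induction n arbitrary: xs)
  case 0
  then show ?case by (cases xs) auto
next
  case (Suc n)
  have inj: "inj (\<lambda>(x::'a,xs). x#xs)" by (auto simp: inj_def)
  show ?case
  proof (cases xs)
    case Nil
    then show ?thesis unfolding replicate_pmf_Suc_map
      by (subst pmf_map_outside) auto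
  next
    case (Cons y ys)
    have "pmf (replicate_pmf (Suc n) Q) xs = pmf (pair_pmf Q (replicate_pmf n Q)) (y,ys)"
      unfolding replicate_pmf_Suc_map Cons
      using pmf_map_inj'[OF inj, of _ "(y,ys)"] by simp
    then show ?thesis using Suc Cons by (simp add: pmf_pair)
  qed
qed

lemma measure_replicate_all:
  fixes Q :: "'a::countable pmf"
  shows "measure_pmf.prob (replicate_pmf n Q) {xs. \<forall>y\<in>set xs. y \<in> B} = measure_pmf.prob Q B ^ n"
proof (induction n)
  case 0
  then show ?case by simp
next
  case (Suc n)
  have "(\<lambda>(x,xs). x#xs) -` {xs. \<forall>y\<in>set xs. y \<in> B} = B \<times> {xs. \<forall>y\<in>set xs. y \<in> B}"
    by auto
  then show ?case unfolding replicate_pmf_Suc_map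
    using Suc by (simp add: measure_pmf_prob_product[OF countableI_type countableI_type])
qed

lemma perm_inv0_uniform:
  assumes k: "k \<ge> 1"
  shows "map_pmf (\<lambda>\<sigma>. inv \<sigma> (0::nat)) (pmf_of_set {\<sigma>. \<sigma> permutes {..<k}}) = pmf_of_set {..<k}"
proof -
  define Perms where "Perms = {\<sigma>. \<sigma> permutes {..<k}}"
  define fib where "fib p = {\<sigma>\<in>Perms. inv \<sigma> 0 = p}" for p
  have finP: "finite Perms" unfolding Perms_def by (rule finite_permutations) simp
  have neP: "Perms \<noteq> {}" unfolding Perms_def using permutes_id by blast
  have cardfib: "card (fib p) = card (fib 0)" if p: "p < k" for p
  proof -
    define t where "t = Transposition.transpose (0::nat) p"
    have tperm: "t permutes {..<k}" unfolding t_def using p k by (intro permutes_swap_id) auto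
    have tt: "\<sigma> \<circ> t \<circ> t = \<sigma>" for \<sigma> :: "nat \<Rightarrow> nat"
      unfolding t_def by (simp add: comp_assoc)
    have invc: "inv (\<sigma> \<circ> t) = t \<circ> inv \<sigma>" if "\<sigma> permutes {..<k}" for \<sigma>
    proof -
      have "inv (\<sigma> \<circ> t) = inv t \<circ> inv \<sigma>"
        using that tperm permutes_bij by (intro o_inv_distrib) blast+
      then show ?thesis unfolding t_def by simp
    qed
    have mapin: "\<sigma> \<circ> t \<in> fib (t q)" if "\<sigma> \<in> fib q" for \<sigma> q
    proof -
      have s: "\<sigma> permutes {..<k}" "inv \<sigma> 0 = q" using that unfolding fib_def Perms_def by auto
      have "\<sigma> \<circ> t permutes {..<k}" by (rule permutes_compose[OF tperm s(1)])
      moreover have "inv (\<sigma> \<circ> t) 0 = t q" using invc[OF s(1)] s(2) by simp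
      ultimately show ?thesis unfolding fib_def Perms_def by simp
    qed
    have t0: "t 0 = p" and tp: "t p = 0" unfolding t_def by simp_all
    have "bij_betw (\<lambda>\<sigma>. \<sigma> \<circ> t) (fib 0) (fib p)"
    proof (rule bij_betw_byWitness[where f' = "\<lambda>\<sigma>. \<sigma> \<circ> t"])
      show "\<forall>a\<in>fib 0. a \<circ> t \<circ> t = a" using tt by blast
      show "\<forall>a\<in>fib p. a \<circ> t \<circ> t = a" using tt by blast
      show "(\<lambda>\<sigma>. \<sigma> \<circ> t) ` fib 0 \<subseteq> fib p"
        using mapin[of _ 0] t0 by auto
      show "(\<lambda>\<sigma>. \<sigma> \<circ> t) ` fib p \<subseteq> fib 0"
        using mapin[of _ p] tp by auto
    qed
    then show ?thesis by (simp add: bij_betw_same_card)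
  qed
  have PU: "Perms = (\<Union>p\<in>{..<k}. fib p)"
  proof -
    have "inv \<sigma> 0 < k" if "\<sigma> permutes {..<k}" for \<sigma>
      using permutes_in_image[OF permutes_inv[OF that], of 0] k by auto
    then show ?thesis unfolding fib_def Perms_def by auto
  qed
  have finfib: "finite (fib p)" for p by (rule finite_subset[OF _ finP]) (auto simp: fib_def)
  have disj: "fib i \<inter> fib j = {}" if "i \<noteq> j" for i j using that unfolding fib_def by auto
  have cardP: "card Perms = k * card (fib 0)"
  proof -
    have "card (\<Union> (fib ` {..<k})) = (\<Sum>i\<in>{..<k}. card (fib i))"
      by (rule card_UN_disjoint) (simp, simp add: finfib, use disj in blast)
    then have "card Perms = (\<Sum>p\<in>{..<k}. card (fib p))" using arg_cong[OF PU, of card] by (rule trans[rotated])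
    also have "\<dots> = (\<Sum>p\<in>{..<k}. card (fib 0))" by (rule sum.cong[OF refl], rule cardfib) simp
    finally show ?thesis by simp
  qed
  have c0: "card (fib 0) > 0" using cardP neP finP by (metis card_0_eq gr0I mult_0_right)
  show ?thesis
  proof (rule pmf_eqI)
    fix p
    have "pmf (map_pmf (\<lambda>\<sigma>. inv \<sigma> 0) (pmf_of_set Perms)) p = card (Perms \<inter> (\<lambda>\<sigma>. inv \<sigma> 0) -` {p}) / card Perms"
      by (simp add: pmf_map measure_pmf_of_set finP neP)
    also have "Perms \<inter> (\<lambda>\<sigma>. inv \<sigma> 0) -` {p} = fib p" unfolding fib_def by auto
    also have "real (card (fib p)) / card Perms = indicator {..<k} p / card {..<k}"
    proof (cases "p < k")
      case True
      then show ?thesis using cardfib[OF True] cardP c0 by (simp add: field_simps)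
    next
      case False
      then have "fib p = {}" using PU fib_def by auto
      then show ?thesis using False by simp
    qed
    finally show "pmf (map_pmf (\<lambda>\<sigma>. inv \<sigma> 0) (pmf_of_set {\<sigma>. \<sigma> permutes {..<k}})) p = pmf (pmf_of_set {..<k}) p"
      using k by (subst pmf_of_set) (auto simp: Perms_def lessThan_empty_iff)
  qed
qed

lemma FlatGame_alt:
  "FlatGame P Q k A = pmf_of_set {\<sigma>. \<sigma> permutes {..<k}} \<bind> (\<lambda>\<sigma>.
     map_pmf (\<lambda>(pw,hs). map (\<lambda>j. (pw#hs) ! \<sigma> j) [0..<k]) (pair_pmf P (replicate_pmf (k-1) Q)) \<bind>
     (\<lambda>L. A L \<bind> (\<lambda>g. return_pmf (inv \<sigma> 0 \<in> set g))))"
proof -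
  have "pmf_of_set {\<sigma>. \<sigma> permutes {..<k}} \<bind> (\<lambda>\<sigma>.
     map_pmf (\<lambda>(pw,hs). map (\<lambda>j. (pw#hs) ! \<sigma> j) [0..<k]) (pair_pmf P (replicate_pmf (k-1) Q)) \<bind>
     (\<lambda>L. A L \<bind> (\<lambda>g. return_pmf (inv \<sigma> 0 \<in> set g)))) =
     pmf_of_set {\<sigma>. \<sigma> permutes {..<k}} \<bind> (\<lambda>\<sigma>. P \<bind> (\<lambda>pw. replicate_pmf (k-1) Q \<bind> (\<lambda>hs.
       A (map (\<lambda>j. (pw#hs) ! \<sigma> j) [0..<k]) \<bind> (\<lambda>g. return_pmf (inv \<sigma> 0 \<in> set g)))))"
    by (simp add: bind_map_pmf pair_pmf_def bind_assoc_pmf bind_return_pmf)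
  also have "\<dots> = P \<bind> (\<lambda>pw. pmf_of_set {\<sigma>. \<sigma> permutes {..<k}} \<bind> (\<lambda>\<sigma>. replicate_pmf (k-1) Q \<bind> (\<lambda>hs.
       A (map (\<lambda>j. (pw#hs) ! \<sigma> j) [0..<k]) \<bind> (\<lambda>g. return_pmf (inv \<sigma> 0 \<in> set g)))))"
    by (rule bind_commute_pmf)
  also have "\<dots> = P \<bind> (\<lambda>pw. replicate_pmf (k-1) Q \<bind> (\<lambda>hs. pmf_of_set {\<sigma>. \<sigma> permutes {..<k}} \<bind> (\<lambda>\<sigma>.
       A (map (\<lambda>j. (pw#hs) ! \<sigma> j) [0..<k]) \<bind> (\<lambda>g. return_pmf (inv \<sigma> 0 \<in> set g)))))"
    by (subst bind_commute_pmf) (rule refl)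
  finally show ?thesis unfolding FlatGame_def by simp
qed

lemma FlatGame_nn:
  "ennreal (pmf (FlatGame P Q k A) True) = (\<integral>\<^sup>+\<sigma>. (\<integral>\<^sup>+L. ennreal (pmf (A L \<bind> (\<lambda>g. return_pmf (inv \<sigma> 0 \<in> set g))) True)
     \<partial>measure_pmf (map_pmf (\<lambda>(pw,hs). map (\<lambda>j. (pw#hs) ! \<sigma> j) [0..<k]) (pair_pmf P (replicate_pmf (k-1) Q))))
     \<partial>measure_pmf (pmf_of_set {\<sigma>. \<sigma> permutes {..<k}}))"
  unfolding FlatGame_alt by (simp add: ennreal_pmf_bind)

lemma pmf_Dsig:
  fixes P Q :: "'a pmf"
  assumes \<sigma>: "\<sigma> permutes {..<k}" and k: "k \<ge> 1"
  shows "pmf (map_pmf (\<lambda>(pw,hs). map (\<lambda>j. (pw#hs) ! \<sigma> j) [0..<k]) (pair_pmf P (replicate_pmf (k-1) Q))) L =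
    (if length L = k then pmf P (L ! inv \<sigma> 0) * (\<Prod>j\<in>{..<k}-{inv \<sigma> 0}. pmf Q (L!j)) else 0)"
proof -
  define g where "g = (\<lambda>(pw::'a,hs). map (\<lambda>j. (pw#hs) ! \<sigma> j) [0..<k])"
  define M where "M = pair_pmf P (replicate_pmf (k-1) Q)"
  define p where "p = inv \<sigma> 0"
  define u where "u = (\<lambda>L::'a list. (L!p, map (\<lambda>i. L ! inv \<sigma> (Suc i)) [0..<k-1]))"
  have sp: "\<sigma> p = 0" unfolding p_def using permutes_inverses[OF \<sigma>] by simp
  have slt: "\<sigma> j < k" if "j < k" for j using permutes_in_image[OF \<sigma>, of j] that by simp
  have ilt: "inv \<sigma> j < k" if "j < k" for j using permutes_in_image[OF permutes_inv[OF \<sigma>], of j] that by simp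
  have plt: "p < k" unfolding p_def using ilt k by simp
  have si: "\<sigma> (inv \<sigma> x) = x" "inv \<sigma> (\<sigma> x) = x" for x using permutes_inverses[OF \<sigma>] by auto
  have pre: "g (pw,hs) = L \<longleftrightarrow> length L = k \<and> (pw,hs) = u L" if hs: "length hs = k - 1" for pw hs
  proof
    assume eq: "g (pw,hs) = L"
    have len: "length L = k" using eq unfolding g_def by auto
    have Lj: "L ! j = (pw#hs) ! \<sigma> j" if "j < k" for j using eq that unfolding g_def by auto
    have "L ! p = pw" using Lj[OF plt] sp by simp
    moreover have "map (\<lambda>i. L ! inv \<sigma> (Suc i)) [0..<k-1] = hs"
    proof (rule nth_equalityI)
      show "length (map (\<lambda>i. L ! inv \<sigma> (Suc i)) [0..<k-1]) = length hs" using hs by simp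
      fix i assume "i < length (map (\<lambda>i. L ! inv \<sigma> (Suc i)) [0..<k-1])"
      then have i: "i < k - 1" by simp
      have "L ! inv \<sigma> (Suc i) = (pw#hs) ! Suc i" using Lj[OF ilt[of "Suc i"]] i si by simp
      then show "map (\<lambda>i. L ! inv \<sigma> (Suc i)) [0..<k-1] ! i = hs ! i" using i by simp
    qed
    ultimately show "length L = k \<and> (pw,hs) = u L" using len unfolding u_def by simp
  next
    assume a: "length L = k \<and> (pw,hs) = u L"
    then have pw: "pw = L ! p" and hs': "hs = map (\<lambda>i. L ! inv \<sigma> (Suc i)) [0..<k-1]" unfolding u_def by auto
    show "g (pw,hs) = L"
    proof (rule nth_equalityI)
      have lg: "length (g (pw, hs)) = k" unfolding g_def by simp
      show "length (g (pw, hs)) = length L" using a lg by simp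
      fix j assume "j < length (g (pw, hs))"
      then have j: "j < k" unfolding g_def by simp
      show "g (pw, hs) ! j = L ! j"
      proof (cases "\<sigma> j")
        case 0
        then have "j = p" unfolding p_def using si by metis
        then show ?thesis using j 0 pw unfolding g_def by simp
      next
        case (Suc i)
        have "i < k - 1" using slt[OF j] Suc by simp
        then show ?thesis using j Suc hs' si unfolding g_def by (simp add: nth_Cons') (metis Suc si(2))
      qed
    qed
  qed
  have setM: "set_pmf M \<subseteq> UNIV \<times> {hs. length hs = k - 1}" unfolding M_def by (auto simp: set_replicate_pmf)
  have "pmf (map_pmf g M) L = measure M (g -` {L})" by (simp add: pmf_map)
  also have "\<dots> = measure M (g -` {L} \<inter> set_pmf M)" by (simp add: measure_Int_set_pmf)
  also have "g -` {L} \<inter> set_pmf M = (if length L = k then {u L} \<inter> set_pmf M else {})"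
    using pre setM by auto
  also have "measure M \<dots> = (if length L = k then pmf M (u L) else 0)"
    by (simp add: measure_Int_set_pmf measure_pmf_single)
  also have "\<dots> = (if length L = k then pmf P (L ! p) * (\<Prod>j\<in>{..<k}-{p}. pmf Q (L!j)) else 0)"
  proof (cases "length L = k")
    case True
    have bij: "bij_betw (\<lambda>i. inv \<sigma> (Suc i)) {..<k-1} ({..<k}-{p})"
    proof (rule bij_betw_imageI)
      show "inj_on (\<lambda>i. inv \<sigma> (Suc i)) {..<k-1}"
        by (rule inj_onI) (metis si(1) nat.inject)
      show "(\<lambda>i. inv \<sigma> (Suc i)) ` {..<k-1} = {..<k}-{p}"
      proof
        show "(\<lambda>i. inv \<sigma> (Suc i)) ` {..<k-1} \<subseteq> {..<k}-{p}"
          using ilt si unfolding p_def by (auto) (metis nat.distinct(1))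
        show "{..<k}-{p} \<subseteq> (\<lambda>i. inv \<sigma> (Suc i)) ` {..<k-1}"
        proof
          fix j assume j: "j \<in> {..<k}-{p}"
          then have "\<sigma> j \<noteq> 0" using sp si by (metis DiffE singletonI)
          then obtain i where i: "\<sigma> j = Suc i" by (cases "\<sigma> j") auto
          have "i < k - 1" using slt[of j] j i by auto
          moreover have "j = inv \<sigma> (Suc i)" using i si by metis
          ultimately show "j \<in> (\<lambda>i. inv \<sigma> (Suc i)) ` {..<k-1}" by blast
        qed
      qed
    qed
    have "pmf M (u L) = pmf P (L!p) * prod_list (map (pmf Q) (map (\<lambda>i. L ! inv \<sigma> (Suc i)) [0..<k-1]))"
      unfolding M_def u_def by (simp add: pmf_pair pmf_replicate_pmf)
    also have "prod_list (map (pmf Q) (map (\<lambda>i. L ! inv \<sigma> (Suc i)) [0..<k-1])) = (\<Prod>i\<in>{..<k-1}. pmf Q (L ! inv \<sigma> (Suc i)))"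
      by (simp add: prod.list_conv_set_nth atLeast0LessThan)
    also have "\<dots> = (\<Prod>j\<in>{..<k}-{p}. pmf Q (L!j))"
      using prod.reindex_bij_betw[OF bij, of "\<lambda>j. pmf Q (L!j)"] by simp
    finally show ?thesis using True by simp
  qed simp
  finally show ?thesis unfolding g_def M_def p_def .
qed

lemma pmf_Dsig_density:
  fixes P Q :: "'a::countable pmf"
  assumes PQ: "\<And>pw. pmf P pw > 0 \<Longrightarrow> pmf Q pw > 0"
  assumes \<sigma>: "\<sigma> permutes {..<k}" and k: "k \<ge> 1"
  shows "pmf (map_pmf (\<lambda>(pw,hs). map (\<lambda>j. (pw#hs) ! \<sigma> j) [0..<k]) (pair_pmf P (replicate_pmf (k-1) Q))) L =
    pmf (replicate_pmf k Q) L * (pmf P (L ! inv \<sigma> 0) / pmf Q (L ! inv \<sigma> 0))"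
proof (cases "length L = k")
  case True
  define p where "p = inv \<sigma> 0"
  have plt: "p < k" unfolding p_def using permutes_in_image[OF permutes_inv[OF \<sigma>], of 0] k by simp
  have "prod_list (map (pmf Q) L) = (\<Prod>j\<in>{..<k}. pmf Q (L!j))"
    using True by (simp add: prod.list_conv_set_nth atLeast0LessThan)
  also have "\<dots> = pmf Q (L!p) * (\<Prod>j\<in>{..<k}-{p}. pmf Q (L!j))"
    using plt by (simp add: prod.remove)
  finally have pl: "prod_list (map (pmf Q) L) = pmf Q (L!p) * (\<Prod>j\<in>{..<k}-{p}. pmf Q (L!j))" .
  define rr where "rr = pmf P (L!p) / pmf Q (L!p)"
  have hPQ: "pmf P (L!p) = pmf Q (L!p) * rr"
  proof (cases "pmf Q (L!p) = 0")
    case True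
    then have "pmf P (L!p) = 0" using PQ[of "L!p"] pmf_nonneg[of P "L!p"] by linarith
    then show ?thesis using True by simp
  qed (simp add: rr_def)
  have eq: "pmf (map_pmf (\<lambda>(pw,hs). map (\<lambda>j. (pw#hs) ! \<sigma> j) [0..<k]) (pair_pmf P (replicate_pmf (k-1) Q))) L
     = pmf P (L!p) * (\<Prod>j\<in>{..<k}-{p}. pmf Q (L!j))"
    using pmf_Dsig[OF \<sigma> k, of P Q L] True by (simp add: p_def)
  have eq2: "pmf (replicate_pmf k Q) L = pmf Q (L!p) * (\<Prod>j\<in>{..<k}-{p}. pmf Q (L!j))"
    using True pl by (simp add: pmf_replicate_pmf)
  show ?thesis unfolding p_def[symmetric] eq eq2 rr_def[symmetric] by (simp add: hPQ mult_ac)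
next
  case False
  then show ?thesis using pmf_Dsig[OF \<sigma> k, of P Q L] by (simp add: pmf_replicate_pmf)
qed

lemma ennreal_of_bool: "ennreal (of_bool b) = of_bool b"
  by (cases b) auto

lemma fe_bind:
  "ennreal (pmf (X \<bind> (\<lambda>g. return_pmf (i \<in> set g))) True) = (\<integral>\<^sup>+g. of_bool (i \<in> set g) \<partial>measure_pmf X)"
  by (simp add: ennreal_pmf_bind indicator_def ennreal_of_bool)

lemma sum_fe_le1:
  assumes "valid_attacker 1 A"
  shows "(\<Sum>p<k. ennreal (pmf (A L \<bind> (\<lambda>g. return_pmf (p \<in> set g))) True)) \<le> 1"
proof -
  have "(\<Sum>p<k. ennreal (pmf (A L \<bind> (\<lambda>g. return_pmf (p \<in> set g))) True))
      = (\<Sum>p<k. \<integral>\<^sup>+g. of_bool (p \<in> set g) \<partial>measure_pmf (A L))"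
    by (simp add: fe_bind)
  also have "\<dots> = (\<integral>\<^sup>+g. (\<Sum>p<k. of_bool (p \<in> set g)) \<partial>measure_pmf (A L))"
    by (rule nn_integral_sum[symmetric]) simp
  also have "\<dots> \<le> (\<integral>\<^sup>+g. 1 \<partial>measure_pmf (A L))"
  proof (rule nn_integral_mono_AE, rule AE_pmfI)
    fix g assume "g \<in> set_pmf (A L)"
    then have "length g = 1" using assms unfolding valid_attacker_def by simp
    then obtain i where g: "g = [i]" by (cases g) auto
    have "(\<Sum>p<k. (of_bool (p \<in> set g) :: ennreal)) = (\<Sum>p<k. of_bool (p = i))"
      using g by simp
    also have "\<dots> \<le> 1" by (cases "i < k") (simp_all add: sum.delta' of_bool_def)
    finally show "(\<Sum>p<k. (of_bool (p \<in> set g) :: ennreal)) \<le> 1" .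
  qed
  also have "\<dots> = 1" by simp
  finally show ?thesis .
qed

theorem theorem3:
  fixes P Q :: "'a::countable pmf" and k :: nat
  assumes "\<And>pw. pmf P pw > 0 \<Longrightarrow> pmf Q pw > 0"
    and "k \<ge> 2"
  shows "flatness P Q k 1 =
    (\<Sum>\<^sub>\<infinity> x \<in> {pmf P pw / pmf Q pw | pw. pmf Q pw > 0}.
        1 / real k * x * (G_le P Q x ^ k - G_less P Q x ^ k))"
proof -
  define r where "r = (\<lambda>x. pmf P x / pmf Q x)"
  define Rk where "Rk = replicate_pmf k Q"
  define M where "M = (\<lambda>L. Max (r ` set L))"
  define fe where "fe = (\<lambda>(A::'a list \<Rightarrow> nat list pmf) (L::'a list) (i::nat). ennreal (pmf (A L \<bind> (\<lambda>g. return_pmf (i \<in> set g))) True))"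
  define Win where "Win = (\<lambda>A. pmf (FlatGame P Q k A) True)"
  define Perms where "Perms = {\<sigma>. \<sigma> permutes {..<k}}"
  have k1: "k \<ge> 1" using assms(2) by simp
  have r_nn: "r x \<ge> 0" for x unfolding r_def by simp
  have finP: "finite Perms" unfolding Perms_def by (rule finite_permutations) simp
  have neP: "Perms \<noteq> {}" unfolding Perms_def using permutes_id by blast
  have win_eq: "ennreal (Win A) = (\<integral>\<^sup>+L. (\<Sum>p<k. ennreal (r (L!p)) * fe A L p) \<partial>measure_pmf Rk) / of_nat k" for A
  proof -
    define H where "H = (\<lambda>p. \<integral>\<^sup>+L. ennreal (r (L!p)) * fe A L p \<partial>measure_pmf Rk)"
    have inner: "(\<integral>\<^sup>+L. fe A L (inv \<sigma> 0) \<partial>measure_pmf (map_pmf (\<lambda>(pw,hs). map (\<lambda>j. (pw#hs) ! \<sigma> j) [0..<k]) (pair_pmf P (replicate_pmf (k-1) Q))))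
       = H (inv \<sigma> 0)" if \<sigma>: "\<sigma> permutes {..<k}" for \<sigma>
    proof -
      have "(\<integral>\<^sup>+L. fe A L (inv \<sigma> 0) \<partial>measure_pmf (map_pmf (\<lambda>(pw,hs). map (\<lambda>j. (pw#hs) ! \<sigma> j) [0..<k]) (pair_pmf P (replicate_pmf (k-1) Q))))
        = (\<integral>\<^sup>+L. ennreal (pmf (map_pmf (\<lambda>(pw,hs). map (\<lambda>j. (pw#hs) ! \<sigma> j) [0..<k]) (pair_pmf P (replicate_pmf (k-1) Q))) L) * fe A L (inv \<sigma> 0) \<partial>count_space UNIV)"
        by (rule nn_integral_measure_pmf)
      also have "\<dots> = (\<integral>\<^sup>+L. ennreal (pmf Rk L) * (ennreal (r (L ! inv \<sigma> 0)) * fe A L (inv \<sigma> 0)) \<partial>count_space UNIV)"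
        by (intro nn_integral_cong)
           (simp only: pmf_Dsig_density[OF assms(1) \<sigma> k1] ennreal_mult'[OF pmf_nonneg] mult.assoc Rk_def r_def)
      also have "\<dots> = H (inv \<sigma> 0)" unfolding H_def by (rule nn_integral_measure_pmf[symmetric])
      finally show ?thesis .
    qed
    have "ennreal (Win A) = (\<integral>\<^sup>+\<sigma>. (\<integral>\<^sup>+L. fe A L (inv \<sigma> 0) \<partial>measure_pmf (map_pmf (\<lambda>(pw,hs). map (\<lambda>j. (pw#hs) ! \<sigma> j) [0..<k]) (pair_pmf P (replicate_pmf (k-1) Q)))) \<partial>measure_pmf (pmf_of_set Perms))"
      unfolding Win_def fe_def Perms_def by (rule FlatGame_nn)
    also have "\<dots> = (\<integral>\<^sup>+\<sigma>. H (inv \<sigma> 0) \<partial>measure_pmf (pmf_of_set Perms))"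
      by (rule nn_integral_cong_AE, rule AE_pmfI) (use finP neP inner in \<open>auto simp: Perms_def\<close>)
    also have "\<dots> = (\<integral>\<^sup>+p. H p \<partial>measure_pmf (map_pmf (\<lambda>\<sigma>. inv \<sigma> 0) (pmf_of_set Perms)))" by simp
    also have "\<dots> = (\<integral>\<^sup>+p. H p \<partial>measure_pmf (pmf_of_set {..<k}))"
      using perm_inv0_uniform[OF k1] by (simp add: Perms_def)
    also have "\<dots> = (\<Sum>p<k. H p) / of_nat k"
      using k1 by (subst nn_integral_pmf_of_set) (auto simp: lessThan_empty_iff)
    also have "(\<Sum>p<k. H p) = (\<integral>\<^sup>+L. (\<Sum>p<k. ennreal (r (L!p)) * fe A L p) \<partial>measure_pmf Rk)"
      unfolding H_def by (rule nn_integral_sum[symmetric]) simp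
    finally show ?thesis .
  qed

  have suppRk: "length L = k \<and> (\<forall>z\<in>set L. pmf Q z > 0)" if "L \<in> set_pmf Rk" for L
  proof -
    have "length L = k" "set L \<subseteq> set_pmf Q"
      using that by (auto simp: Rk_def set_replicate_pmf in_lists_conv_set)
    then show ?thesis by (auto simp: set_pmf_eq')
  qed
  have M_ge: "r (L!p) \<le> M L" if "p < length L" for L p
    unfolding M_def by (rule Max_ge) (use that in auto)
  have M_in: "M L \<in> r ` set L" if "L \<noteq> []" for L
    unfolding M_def by (rule Max_in) (use that in auto)
  have bound: "(\<integral>\<^sup>+L. (\<Sum>p<k. ennreal (r (L!p)) * fe A L p) \<partial>measure_pmf Rk) \<le> (\<integral>\<^sup>+L. ennreal (M L) \<partial>measure_pmf Rk)"
    if vA: "valid_attacker 1 A" for A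
  proof (rule nn_integral_mono_AE, rule AE_pmfI)
    fix L assume L: "L \<in> set_pmf Rk"
    have "(\<Sum>p<k. ennreal (r (L!p)) * fe A L p) \<le> (\<Sum>p<k. ennreal (M L) * fe A L p)"
      by (intro sum_mono mult_right_mono ennreal_leI) (use suppRk[OF L] M_ge in auto)
    also have "\<dots> = ennreal (M L) * (\<Sum>p<k. fe A L p)" by (simp add: sum_distrib_left)
    also have "\<dots> \<le> ennreal (M L) * 1"
      by (intro mult_left_mono) (use sum_fe_le1[OF vA] in \<open>simp_all add: fe_def\<close>)
    finally show "(\<Sum>p<k. ennreal (r (L!p)) * fe A L p) \<le> ennreal (M L)" by simp
  qed
  define am where "am = (\<lambda>L. SOME i. i < length L \<and> r (L!i) = M L)"
  define A0 where "A0 = (\<lambda>L::'a list. return_pmf [am L])"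
  have vA0: "valid_attacker 1 A0" unfolding valid_attacker_def A0_def by simp
  have am: "am L < length L \<and> r (L ! am L) = M L" if "L \<noteq> []" for L
  proof -
    from M_in[OF that] obtain z where z: "z \<in> set L" "M L = r z" by auto
    then obtain i where "i < length L" "L!i = z" by (auto simp: in_set_conv_nth)
    then have "\<exists>i. i < length L \<and> r (L!i) = M L" using z by auto
    then show ?thesis unfolding am_def by (rule someI_ex)
  qed
  have eqA0: "(\<integral>\<^sup>+L. (\<Sum>p<k. ennreal (r (L!p)) * fe A0 L p) \<partial>measure_pmf Rk) = (\<integral>\<^sup>+L. ennreal (M L) \<partial>measure_pmf Rk)"
  proof (rule nn_integral_cong_AE, rule AE_pmfI)
    fix L assume L: "L \<in> set_pmf Rk"
    have len: "length L = k" using suppRk[OF L] by simp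
    then have ne: "L \<noteq> []" using k1 by auto
    have fe0: "fe A0 L p = (if p = am L then 1 else 0)" for p
      unfolding fe_def A0_def by (simp add: bind_return_pmf)
    have "(\<Sum>p<k. ennreal (r (L!p)) * fe A0 L p) = (\<Sum>p<k. if p = am L then ennreal (r (L!p)) else 0)"
      by (intro sum.cong) (auto simp: fe0)
    also have "\<dots> = ennreal (r (L ! am L))" using am[OF ne] len by (simp add: sum.delta')
    also have "\<dots> = ennreal (M L)" using am[OF ne] by simp
    finally show "(\<Sum>p<k. ennreal (r (L!p)) * fe A0 L p) = ennreal (M L)" .
  qed
  have winle: "Win A \<le> Win A0" if "valid_attacker 1 A" for A
  proof -
    have "ennreal (Win A) \<le> ennreal (Win A0)"
      unfolding win_eq eqA0[symmetric] using bound[OF that] eqA0 by (intro divide_right_mono_ennreal) simp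
    then show ?thesis by (simp add: Win_def)
  qed
  have flat: "flatness P Q k 1 = Win A0"
    unfolding flatness_def by (rule cSup_eq_maximum) (use vA0 winle in \<open>auto simp: Win_def\<close>)

  define S where "S = {pmf P pw / pmf Q pw | pw. pmf Q pw > 0}"
  define h where "h = (\<lambda>x. x * (G_le P Q x ^ k - G_less P Q x ^ k))"
  define Mk where "Mk = map_pmf M Rk"
  define I where "I = (\<integral>\<^sup>+L. ennreal (M L) \<partial>measure_pmf Rk)"
  have W0: "ennreal (Win A0) = I / of_nat k" using win_eq[of A0] eqA0 unfolding I_def by simp
  have kne: "(of_nat k :: ennreal) \<noteq> 0" "(of_nat k :: ennreal) \<noteq> top" using k1 by auto
  have I_eq: "I = of_nat k * ennreal (Win A0)"
    unfolding W0 ennreal_times_divide using kne by (simp add: ennreal_mult_divide_eq mult.commute)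
  have I_fin: "I < top" unfolding I_eq using kne by (simp add: ennreal_mult_less_top of_nat_less_top)
  have S_nn: "x \<ge> 0" if "x \<in> S" for x using that unfolding S_def by auto
  have supp: "set_pmf Mk \<subseteq> S"
  proof
    fix y assume "y \<in> set_pmf Mk"
    then obtain L where L: "L \<in> set_pmf Rk" and y: "y = M L" unfolding Mk_def by auto
    have ne: "L \<noteq> []" using suppRk[OF L] k1 by auto
    obtain z where "z \<in> set L" "M L = r z" using M_in[OF ne] by auto
    then show "y \<in> S" using suppRk[OF L] y unfolding S_def r_def by auto
  qed
  have leq: "measure_pmf.prob Rk {L. M L \<le> y} = G_le P Q y ^ k" for y
  proof -
    have "measure_pmf.prob Rk {L. M L \<le> y} = measure_pmf.prob Rk ({L. M L \<le> y} \<inter> set_pmf Rk)"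
      by (simp add: measure_Int_set_pmf)
    also have "{L. M L \<le> y} \<inter> set_pmf Rk = {L. \<forall>z\<in>set L. z \<in> {pw. r pw \<le> y}} \<inter> set_pmf Rk"
    proof -
      have "M L \<le> y \<longleftrightarrow> (\<forall>z\<in>set L. r z \<le> y)" if "L \<in> set_pmf Rk" for L
      proof -
        have "L \<noteq> []" using suppRk[OF that] k1 by auto
        then show ?thesis unfolding M_def by simp
      qed
      then show ?thesis by auto
    qed
    also have "measure_pmf.prob Rk \<dots> = measure_pmf.prob Rk {L. \<forall>z\<in>set L. z \<in> {pw. r pw \<le> y}}"
      by (simp add: measure_Int_set_pmf)
    also have "\<dots> = G_le P Q y ^ k" unfolding Rk_def G_le_def r_def by (rule measure_replicate_all)
    finally show ?thesis .
  qed
  have lessq: "measure_pmf.prob Rk {L. M L < y} = G_less P Q y ^ k" for y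
  proof -
    have "measure_pmf.prob Rk {L. M L < y} = measure_pmf.prob Rk ({L. M L < y} \<inter> set_pmf Rk)"
      by (simp add: measure_Int_set_pmf)
    also have "{L. M L < y} \<inter> set_pmf Rk = {L. \<forall>z\<in>set L. z \<in> {pw. r pw < y}} \<inter> set_pmf Rk"
    proof -
      have "M L < y \<longleftrightarrow> (\<forall>z\<in>set L. r z < y)" if "L \<in> set_pmf Rk" for L
      proof -
        have "L \<noteq> []" using suppRk[OF that] k1 by auto
        then show ?thesis unfolding M_def by simp
      qed
      then show ?thesis by auto
    qed
    also have "measure_pmf.prob Rk \<dots> = measure_pmf.prob Rk {L. \<forall>z\<in>set L. z \<in> {pw. r pw < y}}"
      by (simp add: measure_Int_set_pmf)
    also have "\<dots> = G_less P Q y ^ k" unfolding Rk_def G_less_def r_def by (rule measure_replicate_all)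
    finally show ?thesis .
  qed
  have pmfMk: "pmf Mk y = G_le P Q y ^ k - G_less P Q y ^ k" for y
  proof -
    have "pmf Mk y = measure_pmf.prob Rk (M -` {y})" unfolding Mk_def by (simp add: pmf_map)
    also have "M -` {y} = {L. M L \<le> y} - {L. M L < y}" by auto
    also have "measure_pmf.prob Rk \<dots> = measure_pmf.prob Rk {L. M L \<le> y} - measure_pmf.prob Rk {L. M L < y}"
      by (rule measure_pmf.finite_measure_Diff) auto
    finally show ?thesis using leq lessq by simp
  qed
  have I_S: "I = (\<integral>\<^sup>+y. ennreal (h y) \<partial>count_space S)"
  proof -
    have "I = (\<integral>\<^sup>+y. ennreal y \<partial>measure_pmf Mk)" unfolding I_def Mk_def by simp
    also have "\<dots> = (\<integral>\<^sup>+y. ennreal (pmf Mk y) * ennreal y \<partial>count_space UNIV)"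
      by (rule nn_integral_measure_pmf)
    also have "\<dots> = (\<integral>\<^sup>+y. ennreal (h y) * indicator S y \<partial>count_space UNIV)"
    proof (rule nn_integral_cong)
      fix y
      show "ennreal (pmf Mk y) * ennreal y = ennreal (h y) * indicator S y"
      proof (cases "y \<in> S")
        case True
        have "ennreal (pmf Mk y) * ennreal y = ennreal (pmf Mk y * y)"
          using S_nn[OF True] by (simp add: ennreal_mult'')
        then show ?thesis using True by (simp add: h_def pmfMk mult.commute)
      next
        case False
        then have "pmf Mk y = 0" using supp by (meson pmf_eq_0_set_pmf subsetD)
        then show ?thesis using False by simp
      qed
    qed
    also have "\<dots> = (\<integral>\<^sup>+y. ennreal (h y) \<partial>count_space S)"
      by (rule nn_integral_count_space_indicator[symmetric]) (simp add: NO_MATCH_def)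
    finally show ?thesis .
  qed
  have h_nn: "h x \<ge> 0" if "x \<in> S" for x
  proof -
    have "ennreal (pmf Mk x) \<ge> 0" by simp
    then show ?thesis unfolding h_def using pmfMk[of x] S_nn[OF that] pmf_nonneg[of Mk x] by simp
  qed
  have integ: "integrable (count_space S) h"
  proof (rule integrableI_nonneg)
    show "h \<in> borel_measurable (count_space S)" by simp
    show "AE x in count_space S. 0 \<le> h x" using h_nn by (simp add: AE_count_space)
    show "(\<integral>\<^sup>+x. ennreal (h x) \<partial>count_space S) < \<infinity>" using I_fin I_S by simp
  qed
  have "I = ennreal (infsetsum h S)"
    unfolding I_S by (rule nn_integral_conv_infsetsum) (use integ h_nn in \<open>simp_all add: abs_summable_on_def\<close>)
  also have "infsetsum h S = infsum h S"
    by (rule infsetsum_infsum) (use integ in \<open>simp add: abs_summable_on_def\<close>)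
  finally have I_inf: "I = ennreal (infsum h S)" .
  have inf_nn: "infsum h S \<ge> 0" using h_nn by (simp add: infsum_nonneg)
  have "ennreal (Win A0) = ennreal (infsum h S / real k)"
    unfolding W0 I_inf using k1 inf_nn by (simp add: divide_ennreal[symmetric] ennreal_of_nat_eq_real_of_nat)
  then have "Win A0 = infsum h S / real k" using inf_nn by (simp add: Win_def)
  also have "\<dots> = 1 / real k * infsum h S" by simp
  also have "\<dots> = (\<Sum>\<^sub>\<infinity> x \<in> S. 1 / real k * h x)" by (rule infsum_cmult_right'[symmetric])
  also have "\<dots> = (\<Sum>\<^sub>\<infinity> x \<in> S. 1 / real k * x * (G_le P Q x ^ k - G_less P Q x ^ k))"
    unfolding h_def by (simp only: mult.assoc)
  finally show ?thesis unfolding flat S_def .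
qed

end
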